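(* Let $F$ be a field whose characteristic is not $2$, and let $k\geq 2$ be an integer. Then for every $x\in F$ there exist $a_1,\ldots,a_{2k}\in F$ such that $a_1+a_2+\cdots+a_{2k}=x=a_1a_2\cdots a_{2k}$. *)

theory Defs
  imports Main
begin

end

theory Submission
  imports Defs
begin

definition padf :: "nat \<Rightarrow> 'a::field" where
  "padf i = (if odd i then 1 else -1)"

lemma pad_sum_prod:
  "(\<Sum>i = 5..4+2*m. (padf i :: 'a::field)) = 0 \<and> (\<Prod>i = 5..4+2*m. (padf i :: 'a)) = (-1)^m"
proof (induction m)
  case 0
  then show ?case by simp
next
  case (Suc m)
  have e: "{5..4+2*Suc m} = insert (6+2*m) (insert (5+2*m) {5..4+2*m})" by auto
  have o: "odd (5+2*m)" by simp
  have ev: "\<not> odd (6+2*m)" by simp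
  show ?case using Suc unfolding e by (simp add: padf_def)
qed

definition blk :: "'a \<Rightarrow> 'a \<Rightarrow> 'a \<Rightarrow> nat \<Rightarrow> 'a::field" where
  "blk p q s i = (if i = 1 then p else if i = 2 then q else if i = 3 then s
     else if i = 4 then -s else padf i)"

lemma blk_sum_prod:
  fixes p q s :: "'a::field"
  shows "(\<Sum>i = 1..4+2*m. blk p q s i) = p + q \<and>
         (\<Prod>i = 1..4+2*m. blk p q s i) = - (p*q*s*s) * (-1)^m"
proof -
  have e: "{1..4+2*m} = insert 1 (insert 2 (insert 3 (insert 4 {5..4+2*m})))" by auto
  have c: "(\<Sum>i = 5..4+2*m. blk p q s i) = (\<Sum>i = 5..4+2*m. padf i)"
          "(\<Prod>i = 5..4+2*m. blk p q s i) = (\<Prod>i = 5..4+2*m. padf i)"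
    by (auto intro!: sum.cong prod.cong simp: blk_def)
  show ?thesis using pad_sum_prod[of m, where 'a='a] c unfolding e
    by (simp add: blk_def)
qed

lemma pm_sum_prod:
  fixes q n :: nat
  assumes "q \<le> n"
  shows "(\<Sum>i = 1..n. (if i \<le> q then -1 else 1 :: 'a::field)) = of_nat n - 2 * of_nat q \<and>
         (\<Prod>i = 1..n. (if i \<le> q then -1 else 1 :: 'a)) = (-1)^q"
  using assms
proof (induction n)
  case 0
  then show ?case by simp
next
  case (Suc n)
  show ?case
  proof (cases "q \<le> n")
    case True
    then show ?thesis using Suc by (simp add: algebra_simps)
  next
    case False
    then have "q = Suc n" using Suc.prems by simp
    then show ?thesis
    proof -
      have "(\<Sum>i = 1..n. (if i \<le> q then -1 else 1 :: 'a)) = (\<Sum>i = 1..n. -1)"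
           "(\<Prod>i = 1..n. (if i \<le> q then -1 else 1 :: 'a)) = (\<Prod>i = 1..n. -1)"
        using \<open>q = Suc n\<close> by (auto intro!: sum.cong prod.cong)
      then show ?thesis using \<open>q = Suc n\<close> by (simp add: algebra_simps)
    qed
  qed
qed

lemma two_ne_zero_char:
  assumes "CHAR('a::field) \<noteq> 2"
  shows "(2::'a) \<noteq> 0"
proof
  assume "(2::'a) = 0"
  then have "(of_nat 2 :: 'a) = 0" by simp
  then have "CHAR('a) dvd 2" using of_nat_eq_0_iff_char_dvd[of 2, where 'a='a] by blast
  then have "CHAR('a) = 1 \<or> CHAR('a) = 2"
  proof -
    have "CHAR('a) \<le> 2" using \<open>CHAR('a) dvd 2\<close> by (rule dvd_imp_le) simp
    moreover have "CHAR('a) \<noteq> 0" using \<open>CHAR('a) dvd 2\<close> by (metis dvd_0_left_iff zero_neq_numeral)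
    ultimately show ?thesis by linarith
  qed
  moreover have "CHAR('a) \<noteq> 1"
  proof
    assume "CHAR('a) = 1"
    then have "(of_nat 1 :: 'a) = 0" by (simp add: of_nat_eq_0_iff_char_dvd)
    then show False by simp
  qed
  ultimately show False using assms by simp
qed

theorem theorem1p3:
  fixes x :: "'a :: field" and k :: nat
  assumes "CHAR('a) \<noteq> 2" and "k \<ge> 2"
  shows "\<exists>a :: nat \<Rightarrow> 'a. (\<Sum>i = 1..2*k. a i) = x \<and> (\<Prod>i = 1..2*k. a i) = x"
proof -
  have two: "(2::'a) \<noteq> 0" using two_ne_zero_char assms(1) by blast
  obtain m where km: "k = m + 2" using assms(2) by (metis add.commute le_Suc_ex)
  have n: "2*k = 4 + 2*m" using km by simp
  define \<epsilon> :: 'a where "\<epsilon> = (-1)^m"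
  have eps2: "\<epsilon> * \<epsilon> = 1" unfolding \<epsilon>_def by (simp add: power_mult_distrib[symmetric])
  have epsne: "\<epsilon> \<noteq> 0" using eps2 by auto
  show ?thesis
  proof (cases "x = \<epsilon>")
    case False
    define r where "r = \<epsilon> * x / (x - \<epsilon>)"
    have xe: "x - \<epsilon> \<noteq> 0" using False by simp
    have rr: "r * (x - \<epsilon>) = \<epsilon> * x" unfolding r_def using xe by simp
    let ?a = "blk (x + r) (-r) (1/r)"
    have "(\<Prod>i = 1..2*k. ?a i) = x"
    proof (cases "r = 0")
      case True
      then have "x = 0" using rr epsne by simp
      then show ?thesis using blk_sum_prod[of "x+r" "-r" "1/r" m] True n by simp
    next
      case False
      have "- ((x + r) * - r * (1 / r) * (1 / r)) * \<epsilon> = \<epsilon> * (x + r) / r"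
        using False by (simp add: field_simps)
      also have "\<epsilon> * (x + r) = x * r" using rr eps2
        by (metis (no_types, lifting) add.commute diff_add_cancel distrib_left mult.commute
              mult.left_commute mult_1)
      also have "x * r / r = x" using False by simp
      finally show ?thesis using blk_sum_prod[of "x+r" "-r" "1/r" m] n \<epsilon>_def by simp
    qed
    moreover have "(\<Sum>i = 1..2*k. ?a i) = x" using blk_sum_prod[of "x+r" "-r" "1/r" m] n by simp
    ultimately show ?thesis by blast
  next
    case True
    show ?thesis
    proof (cases "(3::'a) = 0")
      case False
      have e9: "(9::'a) = 3*3" by simp
      have n9: "(9::'a) \<noteq> 0" by (metis e9 False mult_eq_0_iff)
      have e36: "(36::'a) = 9*(2*2)" by simp
      have n36: "(36::'a) \<noteq> 0" by (metis e36 n9 two mult_eq_0_iff)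
      let ?a = "blk (\<epsilon> * (4/3)) (- \<epsilon> * (1/3)) (3/2)"
      have "(\<Sum>i = 1..2*k. ?a i) = x" using blk_sum_prod[of "\<epsilon> * (4/3)" "- \<epsilon> * (1/3)" "3/2" m] n True False n9
        by (simp add: field_simps)
      moreover have "(\<Prod>i = 1..2*k. ?a i) = x"
        using blk_sum_prod[of "\<epsilon> * (4/3)" "- \<epsilon> * (1/3)" "3/2" m] n True False two eps2 \<epsilon>_def n9 n36
        by (simp add: field_simps)
      ultimately show ?thesis by blast
    next
      case three: True
      show ?thesis
      proof (cases "even m")
        case True
        have q: "m \<le> 2*k" using km by simp
        note pm = pm_sum_prod[OF q, where 'a='a]
        have "(of_nat (2*k) :: 'a) - 2 * of_nat m = 4"
          using km by (simp add: algebra_simps)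
        also have "(4::'a) = 1 + 3" by simp
        finally have s: "(of_nat (2*k) :: 'a) - 2 * of_nat m = 1" using three by simp
        have "x = 1" using \<open>x = \<epsilon>\<close> True \<epsilon>_def by simp
        then show ?thesis using pm s True by (intro exI[of _ "\<lambda>i. if i \<le> m then -1 else 1"]) simp
      next
        case False
        have q: "m + 4 \<le> 2*k" using km by simp
        note pm = pm_sum_prod[OF q, where 'a='a]
        have "(of_nat (2*k) :: 'a) - 2 * of_nat (m+4) = -4"
          using km by (simp add: algebra_simps)
        also have "(-4::'a) = -1 - 3" by simp
        finally have s: "(of_nat (2*k) :: 'a) - 2 * of_nat (m+4) = -1" using three by simp
        have "x = -1" using \<open>x = \<epsilon>\<close> False \<epsilon>_def by simp
        then show ?thesis using pm s False by (intro exI[of _ "\<lambda>i. if i \<le> m+4 then -1 else 1"]) simp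
      qed
    qed
  qed
qed

end
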